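(* Let $d\ge 2$ and $t\ge 1$ be integers. Let $v_1,\ldots,v_d$ be pairwise different positive real numbers and $\alpha_1,\ldots,\alpha_{t+d-1}$ pairwise different nonnegative integers, and let $V\in\mathbb{R}^{(t+d-1)\times d}$ be the matrix with entries $V_{j,i}=v_i^{\alpha_j}$. Let $n=\binom{t+d-1}{d-1}$ and let $Q\in\mathbb{R}^{n\times d}$ be the matrix whose rows are indexed by the $(d-1)$-element subsets $S\subset\{1,\ldots,t+d-1\}$ and whose columns are indexed by $i\in\{1,\ldots,d\}$, with entry $Q_{S,i}$ equal to the minor of $V$ formed by the rows in $S$ and the columns in $\{1,\ldots,d\}\setminus\{i\}$. Denote the rows of $Q$ by $Q_1,\ldots,Q_n$ and let $x\in\mathbb{R}^d$ be a vector of unknowns. Then $\{(Q_jx)^t\}_{j=1}^n$ is a basis of $\mathrm{Hom}_t(\mathbb{R}^d)$.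
   Context: $\mathrm{Hom}_t(\mathbb{R}^d)$ denotes the real vector space of homogeneous polynomials of degree $t$ in $d$ real variables (together with the zero polynomial); its dimension is $\binom{t+d-1}{d-1}$. *)

theory Defs
  imports "HOL-Library.Function_Algebras" "Jordan_Normal_Form.Determinant"
begin

(* Indices are 0-based: variables x 0 .. x (d-1), rows 0..t+d-2 of V. *)

definition fscale :: "real \<Rightarrow> ('a \<Rightarrow> real) \<Rightarrow> ('a \<Rightarrow> real)" where
  "fscale c f = (\<lambda>x. c * f x)"

definition monomial_fun :: "nat \<Rightarrow> (nat \<Rightarrow> nat) \<Rightarrow> (nat \<Rightarrow> real) \<Rightarrow> real" where
  "monomial_fun d a = (\<lambda>x. \<Prod>i<d. x i ^ a i)"

(* Hom_t(R^d): span of all monomials of total degree t in d variables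
   (as polynomial functions; R is infinite so this is faithful) *)
definition Hom :: "nat \<Rightarrow> nat \<Rightarrow> ((nat \<Rightarrow> real) \<Rightarrow> real) set" where
  "Hom t d = module.span fscale
      {monomial_fun d a | a. (\<forall>i\<ge>d. a i = 0) \<and> (\<Sum>i<d. a i) = t}"

definition vandermonde :: "(nat \<Rightarrow> real) \<Rightarrow> (nat \<Rightarrow> nat) \<Rightarrow> nat \<Rightarrow> nat \<Rightarrow> real" where
  "vandermonde v \<alpha> j i = v i ^ \<alpha> j"

definition Qentry :: "nat \<Rightarrow> (nat \<Rightarrow> real) \<Rightarrow> (nat \<Rightarrow> nat) \<Rightarrow> nat set \<Rightarrow> nat \<Rightarrow> real" where
  "Qentry d v \<alpha> S i =
     det (mat (d - 1) (d - 1) (\<lambda>(r, c).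
        vandermonde v \<alpha> (sorted_list_of_set S ! r) (sorted_list_of_set ({0..<d} - {i}) ! c)))"

definition Qpow :: "nat \<Rightarrow> nat \<Rightarrow> (nat \<Rightarrow> real) \<Rightarrow> (nat \<Rightarrow> nat) \<Rightarrow> nat set \<Rightarrow> (nat \<Rightarrow> real) \<Rightarrow> real" where
  "Qpow t d v \<alpha> S = (\<lambda>x. (\<Sum>i<d. Qentry d v \<alpha> S i * x i) ^ t)"

end

theory Submission
  imports Defs
begin


interpretation fs: vector_space fscale
  by unfold_locales (auto simp: fscale_def fun_eq_iff algebra_simps)

definition Mons :: "nat \<Rightarrow> nat \<Rightarrow> ((nat \<Rightarrow> real) \<Rightarrow> real) set" where
  "Mons t d = {monomial_fun d a | a. (\<forall>i\<ge>d. a i = 0) \<and> (\<Sum>i<d. a i) = t}"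

lemma Hom_Mons: "Hom t d = fs.span (Mons t d)"
  unfolding Hom_def Mons_def ..

lemma sum_fun_apply: "(sum f A) x = (\<Sum>a\<in>A. f a x)"
  by (induction A rule: infinite_finite_induct) auto

lemma mult_var_span:
  assumes "f \<in> fs.span (Mons t d)" "i < d"
  shows "(\<lambda>x. x i * f x) \<in> fs.span (Mons (Suc t) d)"
proof -
  let ?P = "{f. (\<lambda>x. x i * f x) \<in> fs.span (Mons (Suc t) d)}"
  have sub: "fs.subspace ?P"
    unfolding fs.subspace_def
  proof (intro conjI ballI allI)
    show "0 \<in> ?P" using fs.span_zero by (simp add: zero_fun_def)
  next
    fix f g assume "f \<in> ?P" "g \<in> ?P"
    then have "(\<lambda>x. x i * f x) + (\<lambda>x. x i * g x) \<in> fs.span (Mons (Suc t) d)"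
      using fs.span_add by blast
    then show "f + g \<in> ?P" by (simp add: algebra_simps func_plus)
  next
    fix c f assume "f \<in> ?P"
    then have "fscale c (\<lambda>x. x i * f x) \<in> fs.span (Mons (Suc t) d)"
      using fs.span_scale by blast
    then show "fscale c f \<in> ?P" by (simp add: fscale_def algebra_simps)
  qed
  have base: "Mons t d \<subseteq> ?P"
  proof
    fix m assume "m \<in> Mons t d"
    then obtain a where a: "m = monomial_fun d a" "\<forall>i\<ge>d. a i = 0" "(\<Sum>i<d. a i) = t"
      unfolding Mons_def by blast
    let ?b = "a(i := Suc (a i))"
    have e1: "(\<Sum>j<d. ?b j) = ?b i + (\<Sum>j\<in>{..<d}-{i}. ?b j)"
      by (rule sum.remove) (use assms(2) in auto)
    have e2: "(\<Sum>j\<in>{..<d}-{i}. ?b j) = (\<Sum>j\<in>{..<d}-{i}. a j)"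
      by (rule sum.cong) auto
    have e3: "(\<Sum>j<d. a j) = a i + (\<Sum>j\<in>{..<d}-{i}. a j)"
      by (rule sum.remove) (use assms(2) in auto)
    have e4: "?b i = Suc (a i)" by simp
    have "(\<Sum>j<d. ?b j) = Suc t" using e1 e2 e3 e4 a(3) by linarith
    moreover have "\<forall>j\<ge>d. ?b j = 0" using a(2) assms(2) by auto
    ultimately have "monomial_fun d ?b \<in> Mons (Suc t) d" unfolding Mons_def by blast
    moreover have "monomial_fun d ?b = (\<lambda>x. x i * m x)"
    proof
      fix x :: "nat \<Rightarrow> real"
      have p1: "(\<Prod>j<d. x j ^ ?b j) = x i ^ ?b i * (\<Prod>j\<in>{..<d}-{i}. x j ^ ?b j)"
        by (rule prod.remove) (use assms(2) in auto)
      have p2: "(\<Prod>j\<in>{..<d}-{i}. x j ^ ?b j) = (\<Prod>j\<in>{..<d}-{i}. x j ^ a j)"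
        by (rule prod.cong) auto
      have p3: "(\<Prod>j<d. x j ^ a j) = x i ^ a i * (\<Prod>j\<in>{..<d}-{i}. x j ^ a j)"
        by (rule prod.remove) (use assms(2) in auto)
      have "monomial_fun d ?b x = x i * m x"
        unfolding a(1) monomial_fun_def p1 p2 p3 by simp
      then show "monomial_fun d ?b x = x i * m x" .
    qed
    ultimately show "m \<in> ?P" using fs.span_base by auto
  qed
  show ?thesis using fs.span_minimal[OF base sub] assms(1) by blast
qed

lemma linpow_Hom: "(\<lambda>x. (\<Sum>i<d. c i * x i) ^ t) \<in> Hom t d"
proof (induction t)
  case 0
  have "monomial_fun d (\<lambda>_. 0) \<in> Mons 0 d" unfolding Mons_def by auto
  moreover have "monomial_fun d (\<lambda>_. 0) = (\<lambda>x. (\<Sum>i<d. c i * x i) ^ 0)"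
    by (simp add: monomial_fun_def)
  ultimately show ?case unfolding Hom_Mons using fs.span_base by metis
next
  case (Suc t)
  have "(\<lambda>x. (\<Sum>i<d. c i * x i) ^ Suc t) = (\<Sum>i<d. fscale (c i) (\<lambda>x. x i * (\<Sum>i<d. c i * x i) ^ t))"
    by (simp add: fun_eq_iff sum_fun_apply fscale_def sum_distrib_right algebra_simps)
  also have "\<dots> \<in> fs.span (Mons (Suc t) d)"
    using Suc mult_var_span unfolding Hom_Mons
    by (intro fs.span_sum fs.span_scale) auto
  finally show ?case unfolding Hom_Mons .
qed



lemma polar_gen:
  fixes a :: "nat \<Rightarrow> real"
  assumes "finite J"
  shows "m \<le> card J \<Longrightarrow> (\<Sum>A\<in>Pow J. (-1) ^ (card J - card A) * (sum a A) ^ m)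
     = (if m = card J then fact m * prod a J else 0)"
  using assms
proof (induction J arbitrary: m rule: finite_induct)
  case empty
  then show ?case by simp
next
  case (insert x J)
  let ?n = "card J"
  let ?D = "\<lambda>i. (\<Sum>A\<in>Pow J. (-1) ^ (?n - card A) * (sum a A) ^ i)"
  have cardI: "card (insert x J) = Suc ?n" using insert by simp
  have disj: "Pow J \<inter> insert x ` Pow J = {}" using insert by auto
  have inj: "inj_on (insert x) (Pow J)" using insert unfolding inj_on_def by (metis PowD insert_ident subset_iff)
  have "(\<Sum>A\<in>Pow (insert x J). (-1) ^ (card (insert x J) - card A) * (sum a A) ^ m)
      = (\<Sum>A\<in>Pow J. (-1) ^ (Suc ?n - card A) * (sum a A) ^ m)
        + (\<Sum>A\<in>insert x ` Pow J. (-1) ^ (Suc ?n - card A) * (sum a A) ^ m)"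
    unfolding Pow_insert cardI using insert disj by (intro sum.union_disjoint) auto
  also have "(\<Sum>A\<in>insert x ` Pow J. (-1) ^ (Suc ?n - card A) * (sum a A) ^ m)
      = (\<Sum>A\<in>Pow J. (-1) ^ (Suc ?n - card (insert x A)) * (sum a (insert x A)) ^ m)"
    using inj by (simp add: sum.reindex)
  also have "\<dots> = (\<Sum>A\<in>Pow J. (-1) ^ (?n - card A) * (sum a A + a x) ^ m)"
  proof (rule sum.cong)
    fix A assume A: "A \<in> Pow J"
    then have "finite A" "x \<notin> A" using insert finite_subset by auto
    then show "(-1) ^ (Suc ?n - card (insert x A)) * (sum a (insert x A)) ^ m
       = (-1) ^ (?n - card A) * (sum a A + a x) ^ m" by (simp add: add.commute)
  qed simp
  also have "(\<Sum>A\<in>Pow J. (-1) ^ (Suc ?n - card A) * (sum a A) ^ m)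
      = (\<Sum>A\<in>Pow J. - ((-1) ^ (?n - card A) * (sum a A) ^ m))"
  proof (rule sum.cong)
    fix A assume A: "A \<in> Pow J"
    then have "card A \<le> ?n" using insert card_mono by auto
    then have "Suc ?n - card A = Suc (?n - card A)" by simp
    then show "(-1) ^ (Suc ?n - card A) * (sum a A) ^ m = - ((-1) ^ (?n - card A) * (sum a A) ^ m)"
      by simp
  qed simp
  finally have eq1: "(\<Sum>A\<in>Pow (insert x J). (-1) ^ (card (insert x J) - card A) * (sum a A) ^ m)
     = (\<Sum>A\<in>Pow J. (-1) ^ (?n - card A) * ((sum a A + a x) ^ m - (sum a A) ^ m))"
    by (simp add: sum_negf[symmetric] sum.distrib[symmetric] algebra_simps)
  have binom: "\<And>s::real. (s + a x) ^ m - s ^ m = (\<Sum>i<m. of_nat (m choose i) * s ^ i * a x ^ (m - i))"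
  proof -
    fix s :: real
    have "(s + a x) ^ m = (\<Sum>i\<le>m. of_nat (m choose i) * s ^ i * a x ^ (m - i))"
      by (rule binomial_ring)
    also have "\<dots> = (\<Sum>i<m. of_nat (m choose i) * s ^ i * a x ^ (m - i)) + s ^ m"
      by (simp add: lessThan_Suc_atMost[symmetric])
    finally show "(s + a x) ^ m - s ^ m = (\<Sum>i<m. of_nat (m choose i) * s ^ i * a x ^ (m - i))"
      by simp
  qed
  have eq2: "(\<Sum>A\<in>Pow J. (-1) ^ (?n - card A) * ((sum a A + a x) ^ m - (sum a A) ^ m))
      = (\<Sum>i<m. of_nat (m choose i) * a x ^ (m - i) * ?D i)"
    unfolding binom
    by (simp add: sum_distrib_left sum_distrib_right algebra_simps sum.swap[of _ "{..<m}"])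
  have IH: "\<And>i. i < m \<Longrightarrow> ?D i = (if i = ?n then fact i * prod a J else 0)"
    using insert.IH insert.prems cardI by simp
  show ?case
  proof (cases "m = Suc ?n")
    case True
    have "(\<Sum>i<m. of_nat (m choose i) * a x ^ (m - i) * ?D i)
        = (\<Sum>i<m. if i = ?n then of_nat (m choose i) * a x ^ (m - i) * (fact i * prod a J) else 0)"
      by (rule sum.cong) (auto simp: IH)
    also have "\<dots> = of_nat (Suc ?n) * a x * (fact ?n * prod a J)"
      using True by (simp add: sum.delta)
    also have "\<dots> = fact m * prod a (insert x J)"
      using True insert by (simp add: algebra_simps)
    finally show ?thesis using eq1 eq2 True cardI by simp
  next
    case False
    then have "m \<le> ?n" using insert.prems cardI by simp
    then have "(\<Sum>i<m. of_nat (m choose i) * a x ^ (m - i) * ?D i) = 0"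
      by (intro sum.neutral) (auto simp: IH)
    then show ?thesis using eq1 eq2 False cardI by simp
  qed
qed

lemma polar:
  fixes a :: "nat \<Rightarrow> real"
  assumes "finite J"
  shows "(\<Sum>A\<in>Pow J. (-1) ^ (card J - card A) * (sum a A) ^ card J) = fact (card J) * prod a J"
  using polar_gen[OF assms, of "card J" a] by simp



lemma roots_aux:
  fixes r :: "nat \<Rightarrow> real" and c :: "nat \<Rightarrow> real"
  shows "finite E \<Longrightarrow> card E \<le> k \<Longrightarrow> (\<forall>i. Suc i < k \<longrightarrow> r i < r (Suc i)) \<Longrightarrow> (\<forall>i<k. 0 < r i)
    \<Longrightarrow> (\<forall>i<k. (\<Sum>e\<in>E. c e * r i ^ e) = 0) \<Longrightarrow> \<forall>e\<in>E. c e = 0"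
proof (induction k arbitrary: E c r)
  case 0
  then show ?case by simp
next
  case (Suc k)
  show ?case
  proof (cases "E = {}")
    case True then show ?thesis by simp
  next
    case False
    define e0 where "e0 = Min E"
    have e0E: "e0 \<in> E" using False Suc.prems(1) e0_def by simp
    have e0le: "\<And>e. e \<in> E \<Longrightarrow> e0 \<le> e" using Suc.prems(1) e0_def by simp
    define g where "g = (\<lambda>x::real. \<Sum>e\<in>E. c e * x ^ (e - e0))"
    define g' where "g' = (\<lambda>x::real. \<Sum>e\<in>E. c e * (real (e - e0) * x ^ (e - e0 - Suc 0)))"
    have gd: "\<And>x. (g has_real_derivative g' x) (at x)"
      unfolding g_def g'_def by (intro DERIV_sum DERIV_cmult DERIV_pow)
    have rpos: "\<And>i. i < Suc k \<Longrightarrow> 0 < r i" using Suc.prems(4) by blast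
    have groot: "\<And>i. i < Suc k \<Longrightarrow> g (r i) = 0"
    proof -
      fix i assume i: "i < Suc k"
      have "(\<Sum>e\<in>E. c e * r i ^ e) = r i ^ e0 * g (r i)"
        unfolding g_def sum_distrib_left
      proof (rule sum.cong)
        fix e assume "e \<in> E"
        then have "e0 + (e - e0) = e" using e0le by simp
        then have "r i ^ e = r i ^ e0 * r i ^ (e - e0)" using power_add[of "r i" e0 "e - e0"] by simp
        then show "c e * r i ^ e = r i ^ e0 * (c e * r i ^ (e - e0))" by simp
      qed simp
      then show "g (r i) = 0" using Suc.prems(5) i rpos[OF i] by simp
    qed
    have "\<forall>i. \<exists>z. Suc i < Suc k \<longrightarrow> r i < z \<and> z < r (Suc i) \<and> g' z = 0"
    proof (intro allI impI)
      fix i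
      show "\<exists>z. Suc i < Suc k \<longrightarrow> r i < z \<and> z < r (Suc i) \<and> g' z = 0"
      proof (cases "Suc i < Suc k")
        case True
        have lt: "r i < r (Suc i)" using Suc.prems(3) True by simp
        have "continuous_on {r i..r (Suc i)} g"
          using gd by (meson DERIV_isCont continuous_at_imp_continuous_on)
        moreover have "\<And>x. g differentiable (at x)"
          using gd real_differentiable_def by blast
        moreover have "g (r i) = g (r (Suc i))" using groot[of i] groot[of "Suc i"] True by simp
        ultimately obtain z where "r i < z" "z < r (Suc i)" "DERIV g z :> 0"
          using Rolle[OF lt, of g] by blast
        then show ?thesis using DERIV_unique gd by blast
      qed simp
    qed
    then obtain z where z: "\<And>i. Suc i < Suc k \<Longrightarrow> r i < z i \<and> z i < r (Suc i) \<and> g' (z i) = 0"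
      by metis
    define E' where "E' = (\<lambda>e. e - e0 - 1) ` (E - {e0})"
    define c' where "c' = (\<lambda>e'. c (e' + e0 + 1) * real (e' + 1))"
    have inj: "inj_on (\<lambda>e. e - e0 - 1) (E - {e0})"
      unfolding inj_on_def using e0le 
    proof (intro ballI impI)
      fix x y assume x: "x \<in> E - {e0}" and y: "y \<in> E - {e0}" and eq: "x - e0 - 1 = y - e0 - 1"
      have "e0 < x" "e0 < y" using x y e0le by force+
      then show "x = y" using eq by simp
    qed
    have fE': "finite E'" using Suc.prems(1) E'_def by simp
    have cardE': "card E' \<le> k"
      using Suc.prems(1,2) e0E card_image[OF inj] unfolding E'_def by (simp add: card_Diff_singleton)
    have zinc: "\<forall>i. Suc i < k \<longrightarrow> z i < z (Suc i)"
    proof (intro allI impI)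
      fix i assume "Suc i < k"
      then have "z i < r (Suc i)" "r (Suc i) < z (Suc i)" using z[of i] z[of "Suc i"] by auto
      then show "z i < z (Suc i)" by simp
    qed
    have z0: "\<forall>i<k. 0 < z i"
    proof (intro allI impI)
      fix i assume "i < k"
      then have "r i < z i" "0 < r i" using z[of i] rpos[of i] by auto
      then show "0 < z i" by simp
    qed
    have "\<forall>i<k. (\<Sum>e'\<in>E'. c' e' * z i ^ e') = 0"
    proof (intro allI impI)
      fix i assume i: "i < k"
      have "(\<Sum>e'\<in>E'. c' e' * z i ^ e') = (\<Sum>e\<in>E - {e0}. c' (e - e0 - 1) * z i ^ (e - e0 - 1))"
        unfolding E'_def by (rule sum.reindex[OF inj, unfolded comp_def])
      also have "\<dots> = (\<Sum>e\<in>E - {e0}. c e * (real (e - e0) * z i ^ (e - e0 - Suc 0)))"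
      proof (rule sum.cong)
        fix e assume e: "e \<in> E - {e0}"
        then have "e0 < e" using e0le by force
        then have "e - e0 - 1 + e0 + 1 = e" "e - e0 - 1 + 1 = e - e0" by auto
        then show "c' (e - e0 - 1) * z i ^ (e - e0 - 1) = c e * (real (e - e0) * z i ^ (e - e0 - Suc 0))"
          unfolding c'_def by (simp add: \<open>e0 < e\<close> of_nat_diff)
      qed simp
      also have "\<dots> = g' (z i)"
        unfolding g'_def using Suc.prems(1) e0E by (simp add: sum.remove[of E e0])
      also have "\<dots> = 0" using z i by simp
      finally show "(\<Sum>e'\<in>E'. c' e' * z i ^ e') = 0" .
    qed
    then have c'0: "\<forall>e'\<in>E'. c' e' = 0"
      using Suc.IH[OF fE' cardE' zinc] z0 by blast
    have cne: "\<And>e. e \<in> E - {e0} \<Longrightarrow> c e = 0"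
    proof -
      fix e assume e: "e \<in> E - {e0}"
      then have "e0 < e" using e0le by force
      then have "e - e0 - 1 + e0 + 1 = e" by auto
      moreover have "c' (e - e0 - 1) = 0" using c'0 e unfolding E'_def by blast
      ultimately have "c e * real (e - e0) = 0" unfolding c'_def by (simp add: \<open>e0 < e\<close>)
      then show "c e = 0" using \<open>e0 < e\<close> by simp
    qed
    have "g (r 0) = c e0"
      unfolding g_def using Suc.prems(1) e0E cne by (simp add: sum.remove[of E e0])
    then have "c e0 = 0" using groot by simp
    then show ?thesis using cne by blast
  qed
qed


lemma vdm_nonsing:
  fixes v :: "nat \<Rightarrow> real" and \<beta> :: "nat \<Rightarrow> nat"
  assumes vpos: "\<forall>i<d. 0 < v i" and vinj: "inj_on v {0..<d}" and binj: "inj_on \<beta> {0..<d}"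
  shows "det (mat d d (\<lambda>(r,c). v c ^ \<beta> r)) \<noteq> 0"
proof
  let ?A = "mat d d (\<lambda>(r,c). v c ^ \<beta> r)"
  have A: "?A \<in> carrier_mat d d" by simp
  assume "det ?A = 0"
  then have "det ?A\<^sup>T = 0" using det_transpose[OF A] by simp
  then obtain y where y: "y \<in> carrier_vec d" "y \<noteq> 0\<^sub>v d" "?A\<^sup>T *\<^sub>v y = 0\<^sub>v d"
    using det_0_iff_vec_prod_zero[of "?A\<^sup>T" d] by auto
  have eqs: "\<And>c. c < d \<Longrightarrow> (\<Sum>r<d. y $ r * v c ^ \<beta> r) = 0"
  proof -
    fix c assume c: "c < d"
    have "(?A\<^sup>T *\<^sub>v y) $ c = 0" using y(3) c by simp
    moreover have "(?A\<^sup>T *\<^sub>v y) $ c = (\<Sum>r<d. y $ r * v c ^ \<beta> r)"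
      using c y(1) by (simp add: scalar_prod_def lessThan_atLeast0 mult.commute)
    ultimately show "(\<Sum>r<d. y $ r * v c ^ \<beta> r) = 0" by simp
  qed
  define E where "E = \<beta> ` {0..<d}"
  define ce where "ce = (\<lambda>e. y $ (the_inv_into {0..<d} \<beta> e))"
  have sumE: "\<And>x::real. (\<Sum>e\<in>E. ce e * x ^ e) = (\<Sum>r<d. y $ r * x ^ \<beta> r)"
    unfolding E_def ce_def lessThan_atLeast0
    by (simp add: sum.reindex[OF binj] the_inv_into_f_f[OF binj])
  define R where "R = sorted_list_of_set (v ` {0..<d})"
  have lenR: "length R = d" unfolding R_def using card_image[OF vinj] by simp
  have setR: "set R = v ` {0..<d}" unfolding R_def by simp
  have sR: "sorted_wrt (<) R" unfolding R_def by simp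
  have "\<forall>e\<in>E. ce e = 0"
  proof (rule roots_aux[of E d "\<lambda>i. R ! i"])
    show "finite E" unfolding E_def by simp
    show "card E \<le> d" unfolding E_def using card_image_le[of "{0..<d}" \<beta>] by simp
    show "\<forall>i. Suc i < d \<longrightarrow> R ! i < R ! Suc i"
      using sR lenR by (simp add: sorted_wrt_nth_less)
    show "\<forall>i<d. 0 < R ! i"
    proof (intro allI impI)
      fix i assume "i < d"
      then have "R ! i \<in> v ` {0..<d}" using setR lenR nth_mem by metis
      then show "0 < R ! i" using vpos by auto
    qed
    show "\<forall>i<d. (\<Sum>e\<in>E. ce e * (R ! i) ^ e) = 0"
    proof (intro allI impI)
      fix i assume "i < d"
      then have "R ! i \<in> v ` {0..<d}" using setR lenR nth_mem by metis
      then obtain c where "c < d" "R ! i = v c" by auto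
      then show "(\<Sum>e\<in>E. ce e * (R ! i) ^ e) = 0" using sumE eqs by simp
    qed
  qed
  then have "\<And>r. r < d \<Longrightarrow> y $ r = 0"
    unfolding E_def ce_def using the_inv_into_f_f[OF binj] by fastforce
  then have "y = 0\<^sub>v d" using y(1) by (intro eq_vecI) auto
  then show False using y(2) by simp
qed



lemma sl_minus:
  assumes "j < d" "c < d - 1"
  shows "sorted_list_of_set ({0..<d} - {j}) ! c = (if c < j then c else Suc c)"
proof -
  have "sorted_list_of_set ({0..<d} - {j}) = [0..<j] @ [Suc j..<d]"
  proof -
    have "{0..<d} - {j} = set ([0..<j] @ [Suc j..<d])" using assms by auto
    moreover have "sorted ([0..<j] @ [Suc j..<d])" "distinct ([0..<j] @ [Suc j..<d])"
      by (auto simp: sorted_append)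
    ultimately show ?thesis
      by (simp only: sorted_list_of_set_sort_remdups distinct_remdups_id sorted_sort_id)
  qed
  then show ?thesis using assms by (simp add: nth_append)
qed

definition Wm :: "nat \<Rightarrow> (nat \<Rightarrow> real) \<Rightarrow> (nat \<Rightarrow> nat) \<Rightarrow> nat set \<Rightarrow> (nat \<Rightarrow> real) \<Rightarrow> real mat" where
  "Wm d v \<alpha> S w = mat d d (\<lambda>(r,c). if r = 0 then w c else v c ^ \<alpha> (sorted_list_of_set S ! (r - 1)))"

lemma lap:
  assumes "1 \<le> d"
  shows "det (Wm d v \<alpha> S w) = (\<Sum>c<d. (-1) ^ c * w c * Qentry d v \<alpha> S c)"
proof -
  have W: "Wm d v \<alpha> S w \<in> carrier_mat d d" unfolding Wm_def by simp
  have "det (Wm d v \<alpha> S w) = (\<Sum>j<d. Wm d v \<alpha> S w $$ (0,j) * cofactor (Wm d v \<alpha> S w) 0 j)"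
    using assms by (intro laplace_expansion_row[OF W]) auto
  also have "\<dots> = (\<Sum>c<d. (-1) ^ c * w c * Qentry d v \<alpha> S c)"
  proof (rule sum.cong)
    fix j assume j: "j \<in> {..<d}"
    have "mat_delete (Wm d v \<alpha> S w) 0 j = mat (d - 1) (d - 1) (\<lambda>(r, c).
        vandermonde v \<alpha> (sorted_list_of_set S ! r) (sorted_list_of_set ({0..<d} - {j}) ! c))"
      using j by (intro eq_matI) (auto simp: mat_delete_def Wm_def vandermonde_def sl_minus)
    then show "Wm d v \<alpha> S w $$ (0,j) * cofactor (Wm d v \<alpha> S w) 0 j = (-1) ^ j * w j * Qentry d v \<alpha> S j"
      using j assms unfolding cofactor_def Qentry_def by (simp add: Wm_def)
  qed simp
  finally show ?thesis .
qed


lemma card_Mons: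
  assumes "1 \<le> d"
  shows "finite (Mons t d) \<and> card (Mons t d) \<le> (t + d - 1) choose t"
proof -
  define E where "E = {a::nat\<Rightarrow>nat. (\<forall>i\<ge>d. a i = 0) \<and> (\<Sum>i<d. a i) = t}"
  define LL where "LL = {l::nat list. length l = d \<and> sum_list l = t}"
  define f where "f = (\<lambda>a::nat\<Rightarrow>nat. map a [0..<d])"
  have cardL: "card LL = (t + d - 1) choose t" unfolding LL_def by (rule card_length_sum_list)
  have "0 < (t + d - 1) choose t" using assms by (simp add: zero_less_binomial_iff)
  then have finL: "finite LL" using cardL card_gt_0_iff by metis
  have inj: "inj_on f E"
  proof
    fix a b assume a: "a \<in> E" and b: "b \<in> E" and eq: "f a = f b"
    show "a = b"
    proof
      fix i show "a i = b i"
      proof (cases "i < d")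
        case True
        show ?thesis using eq True unfolding f_def by simp
      next
        case False then show ?thesis using a b unfolding E_def by simp
      qed
    qed
  qed
  have img: "f ` E \<subseteq> LL"
  proof
    fix l assume "l \<in> f ` E"
    then obtain a where a: "a \<in> E" "l = f a" by blast
    have "sum_list (map a [0..<d]) = (\<Sum>i<d. a i)"
      by (simp add: sum_list_distinct_conv_sum_set atLeast0LessThan)
    then show "l \<in> LL" using a unfolding LL_def E_def f_def by simp
  qed
  have finE: "finite E" using inj_on_finite[OF inj img finL] .
  have cE: "card E \<le> card LL" using card_inj_on_le[OF inj img finL] .
  have M: "Mons t d = monomial_fun d ` E" unfolding Mons_def E_def by blast
  show ?thesis using finE cE cardL card_image_le[OF finE, of "monomial_fun d"] unfolding M by simp
qed

lemma span_eq_count: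
  assumes fM: "finite M" and iB: "\<not> fs.dependent B" and BM: "B \<subseteq> fs.span M" and c: "card M \<le> card B"
  shows "fs.span B = fs.span M"
proof
  show "fs.span B \<subseteq> fs.span M" using BM fs.span_minimal fs.subspace_span by blast
  have "M \<subseteq> fs.span B"
  proof
    fix a assume aM: "a \<in> M"
    show "a \<in> fs.span B"
    proof (rule ccontr)
      assume na: "a \<notin> fs.span B"
      then have i2: "\<not> fs.dependent (insert a B)" using fs.independent_insertI iB by blast
      have "insert a B \<subseteq> fs.span M" using BM aM fs.span_base by blast
      from fs.independent_span_bound[OF fM i2 this] have "finite (insert a B)" "card (insert a B) \<le> card M" by auto
      moreover have "a \<notin> B" using na fs.span_base by blast
      ultimately show False using c by simp
    qed
  qed
  then show "fs.span M \<subseteq> fs.span B" using fs.span_minimal fs.subspace_span by blast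
qed

definition uvec :: "(nat \<Rightarrow> real) \<Rightarrow> (nat \<Rightarrow> nat) \<Rightarrow> nat \<Rightarrow> nat \<Rightarrow> real" where
  "uvec v \<alpha> j = (\<lambda>i. (-1) ^ i * v i ^ \<alpha> j)"

definition phi :: "nat \<Rightarrow> (nat \<Rightarrow> real) \<Rightarrow> (nat \<Rightarrow> nat) \<Rightarrow> nat set \<Rightarrow> ((nat \<Rightarrow> real) \<Rightarrow> real) \<Rightarrow> real" where
  "phi N v \<alpha> T f = (\<Sum>A\<in>Pow ({0..<N} - T). (-1) ^ (card ({0..<N} - T) - card A) * f (\<Sum>j\<in>A. uvec v \<alpha> j))"

lemma phi_lin: "finite F \<Longrightarrow> phi N v \<alpha> T (\<Sum>f\<in>F. fscale (c f) f) = (\<Sum>f\<in>F. c f * phi N v \<alpha> T f)"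
  unfolding phi_def sum_fun_apply fscale_def
  by (simp add: sum_distrib_left sum.swap[of _ F] algebra_simps)

lemma ell_u:
  assumes "1 \<le> d"
  shows "(\<Sum>i<d. Qentry d v \<alpha> S i * uvec v \<alpha> j i) = det (Wm d v \<alpha> S (\<lambda>c. v c ^ \<alpha> j))"
  unfolding lap[OF assms] uvec_def by (simp add: algebra_simps)

lemma det_in:
  assumes "finite S" "card S = d - 1" "j \<in> S" "1 \<le> d"
  shows "det (Wm d v \<alpha> S (\<lambda>c. v c ^ \<alpha> j)) = 0"
proof -
  have "j \<in> set (sorted_list_of_set S)" using assms by simp
  then obtain r where r: "r < length (sorted_list_of_set S)" "sorted_list_of_set S ! r = j"
    by (metis in_set_conv_nth)
  have rl: "Suc r < d" using r assms by simp
  show ?thesis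
  proof (rule det_identical_rows[of _ d 0 "Suc r"])
    show "Wm d v \<alpha> S (\<lambda>c. v c ^ \<alpha> j) \<in> carrier_mat d d" unfolding Wm_def by simp
    show "row (Wm d v \<alpha> S (\<lambda>c. v c ^ \<alpha> j)) 0 = row (Wm d v \<alpha> S (\<lambda>c. v c ^ \<alpha> j)) (Suc r)"
      using rl r by (intro eq_vecI) (auto simp: Wm_def)
  qed (use rl in auto)
qed

lemma det_out:
  assumes Ssub: "S \<subseteq> {0..<N}" and cS: "card S = d - 1" and jN: "j < N" and jS: "j \<notin> S"
    and ainj: "inj_on \<alpha> {0..<N}" and vpos: "\<forall>i<d. 0 < v i" and vinj: "inj_on v {0..<d}"
    and d1: "1 \<le> d"
  shows "det (Wm d v \<alpha> S (\<lambda>c. v c ^ \<alpha> j)) \<noteq> 0"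
proof -
  have fS: "finite S" using Ssub finite_subset by blast
  define sl where "sl = sorted_list_of_set S"
  have lsl: "length sl = d - 1" unfolding sl_def using cS by simp
  have dsl: "distinct sl" unfolding sl_def by simp
  have ssl: "set sl = S" unfolding sl_def using fS by simp
  define \<gamma> where "\<gamma> = (\<lambda>r. if r = 0 then j else sl ! (r - 1))"
  have eqm: "Wm d v \<alpha> S (\<lambda>c. v c ^ \<alpha> j) = mat d d (\<lambda>(r,c). v c ^ (\<alpha> \<circ> \<gamma>) r)"
    unfolding Wm_def \<gamma>_def sl_def by (intro eq_matI) auto
  have gin: "\<gamma> ` {0..<d} \<subseteq> {0..<N}"
  proof
    fix x assume "x \<in> \<gamma> ` {0..<d}"
    then obtain r where r: "r < d" "x = \<gamma> r" by auto
    show "x \<in> {0..<N}"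
    proof (cases "r = 0")
      case True then show ?thesis using r jN \<gamma>_def by simp
    next
      case False
      then have "r - 1 < length sl" using r lsl by simp
      then have "sl ! (r - 1) \<in> S" using ssl nth_mem by blast
      then show ?thesis using r False Ssub \<gamma>_def by auto
    qed
  qed
  have ginj: "inj_on \<gamma> {0..<d}"
  proof
    fix x y assume x: "x \<in> {0..<d}" and y: "y \<in> {0..<d}" and eq: "\<gamma> x = \<gamma> y"
    have mem: "\<And>r. 0 < r \<Longrightarrow> r < d \<Longrightarrow> sl ! (r - 1) \<in> S"
    proof -
      fix r assume "0 < r" "r < d"
      then have "r - 1 < length sl" using lsl by simp
      then show "sl ! (r - 1) \<in> S" using ssl nth_mem by blast
    qed
    show "x = y"
    proof (cases "x = 0"; cases "y = 0")
      assume "x \<noteq> 0" "y \<noteq> 0"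
      then have "sl ! (x - 1) = sl ! (y - 1)" using eq \<gamma>_def by simp
      moreover have "x - 1 < length sl" "y - 1 < length sl" using lsl x y \<open>x \<noteq> 0\<close> \<open>y \<noteq> 0\<close> by auto
      ultimately have "x - 1 = y - 1" using dsl nth_eq_iff_index_eq by blast
      then show ?thesis using \<open>x \<noteq> 0\<close> \<open>y \<noteq> 0\<close> by simp
    next
      assume "x = 0" "y \<noteq> 0"
      then show ?thesis using eq mem[of y] y jS \<gamma>_def by auto
    next
      assume "x \<noteq> 0" "y = 0"
      then show ?thesis using eq mem[of x] x jS \<gamma>_def by auto
    qed simp
  qed
  have binj: "inj_on (\<alpha> \<circ> \<gamma>) {0..<d}"
    using comp_inj_on[OF ginj inj_on_subset[OF ainj gin]] .
  show ?thesis unfolding eqm by (rule vdm_nonsing[OF vpos vinj binj])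
qed

lemma phi_Qpow:
  assumes "card ({0..<N} - T) = t"
  shows "phi N v \<alpha> T (Qpow t d v \<alpha> S) = fact t * (\<Prod>j\<in>{0..<N} - T. (\<Sum>i<d. Qentry d v \<alpha> S i * uvec v \<alpha> j i))"
proof -
  have lin: "\<And>A. (\<Sum>i<d. Qentry d v \<alpha> S i * (\<Sum>j\<in>A. uvec v \<alpha> j) i) = (\<Sum>j\<in>A. (\<Sum>i<d. Qentry d v \<alpha> S i * uvec v \<alpha> j i))"
    by (simp add: sum_fun_apply sum_distrib_left sum.swap[of _ "{..<d}"])
  show ?thesis
    unfolding phi_def Qpow_def lin
    using polar[of "{0..<N} - T" "\<lambda>j. (\<Sum>i<d. Qentry d v \<alpha> S i * uvec v \<alpha> j i)"] assms by simp
qed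

theorem mainTheorem2:
  fixes d t :: nat and v :: "nat \<Rightarrow> real" and \<alpha> :: "nat \<Rightarrow> nat"
  assumes "d \<ge> 2" and "t \<ge> 1"
    and "\<And>i. i < d \<Longrightarrow> v i > 0"
    and "inj_on v {0..<d}"
    and "inj_on \<alpha> {0..<t + d - 1}"
  defines "Subs \<equiv> {S. S \<subseteq> {0..<t + d - 1} \<and> card S = d - 1}"
  shows "inj_on (Qpow t d v \<alpha>) Subs
    \<and> Qpow t d v \<alpha> ` Subs \<subseteq> Hom t d
    \<and> \<not> module.dependent fscale (Qpow t d v \<alpha> ` Subs)
    \<and> module.span fscale (Qpow t d v \<alpha> ` Subs) = Hom t d"
proof -
  define N where "N = t + d - 1"
  have d1: "1 \<le> d" using assms(1) by simp
  have vpos: "\<forall>i<d. 0 < v i" using assms(3) by blast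
  have Subs: "Subs = {S. S \<subseteq> {0..<N} \<and> card S = d - 1}" unfolding Subs_def N_def ..
  have ainj: "inj_on \<alpha> {0..<N}" using assms(5) unfolding N_def .
  have cC: "\<And>T. T \<in> Subs \<Longrightarrow> card ({0..<N} - T) = t"
  proof -
    fix T assume "T \<in> Subs"
    then have "T \<subseteq> {0..<N}" "card T = d - 1" using Subs by auto
    moreover have "finite T" using \<open>T \<subseteq> {0..<N}\<close> finite_subset by blast
    ultimately show "card ({0..<N} - T) = t" using card_Diff_subset[of T "{0..<N}"] d1
      unfolding N_def by simp
  qed
  have key: "\<And>S T. S \<in> Subs \<Longrightarrow> T \<in> Subs \<Longrightarrow> phi N v \<alpha> T (Qpow t d v \<alpha> S) = 0 \<longleftrightarrow> S \<noteq> T"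
  proof -
    fix S T assume S: "S \<in> Subs" and T: "T \<in> Subs"
    have Ssub: "S \<subseteq> {0..<N}" and cS: "card S = d - 1" using S Subs by auto
    have Tsub: "T \<subseteq> {0..<N}" and cT: "card T = d - 1" using T Subs by auto
    have fS: "finite S" using Ssub finite_subset by blast
    have fT: "finite T" using Tsub finite_subset by blast
    have ph: "phi N v \<alpha> T (Qpow t d v \<alpha> S) = fact t * (\<Prod>j\<in>{0..<N} - T. det (Wm d v \<alpha> S (\<lambda>c. v c ^ \<alpha> j)))"
      unfolding phi_Qpow[OF cC[OF T]] ell_u[OF d1] ..
    show "phi N v \<alpha> T (Qpow t d v \<alpha> S) = 0 \<longleftrightarrow> S \<noteq> T"
    proof
      assume "phi N v \<alpha> T (Qpow t d v \<alpha> S) = 0"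
      then obtain j where j: "j \<in> {0..<N} - T" "det (Wm d v \<alpha> S (\<lambda>c. v c ^ \<alpha> j)) = 0"
        unfolding ph using prod_zero_iff[of "{0..<N} - T"] by (simp del: Diff_iff) blast
      show "S \<noteq> T"
      proof
        assume "S = T"
        then show False using det_out[OF Ssub cS _ _ ainj vpos assms(4) d1, of j] j by auto
      qed
    next
      assume "S \<noteq> T"
      then have "\<not> S \<subseteq> T" using card_subset_eq[OF fT, of S] cS cT by auto
      then obtain j where "j \<in> S" "j \<notin> T" by blast
      then have "j \<in> {0..<N} - T" "det (Wm d v \<alpha> S (\<lambda>c. v c ^ \<alpha> j)) = 0"
        using Ssub det_in[OF fS cS _ d1] by auto
      then show "phi N v \<alpha> T (Qpow t d v \<alpha> S) = 0" unfolding ph using prod_zero_iff[of "{0..<N} - T"] by auto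
    qed
  qed
  have inj: "inj_on (Qpow t d v \<alpha>) Subs"
  proof
    fix S T assume S: "S \<in> Subs" and T: "T \<in> Subs" and eq: "Qpow t d v \<alpha> S = Qpow t d v \<alpha> T"
    show "S = T" using key[OF S T] key[OF T T] eq by auto
  qed
  have hom: "Qpow t d v \<alpha> ` Subs \<subseteq> Hom t d"
    unfolding Qpow_def using linpow_Hom by blast
  have indep: "\<not> fs.dependent (Qpow t d v \<alpha> ` Subs)"
  proof
    assume "fs.dependent (Qpow t d v \<alpha> ` Subs)"
    then obtain F c where F: "finite F" "F \<subseteq> Qpow t d v \<alpha> ` Subs" "(\<Sum>f\<in>F. fscale (c f) f) = 0"
      and ex: "\<exists>f0\<in>F. c f0 \<noteq> 0"
      unfolding fs.dependent_explicit by blast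
    then obtain f0 where f0: "f0 \<in> F" "c f0 \<noteq> 0" by blast
    then obtain S0 where S0: "S0 \<in> Subs" "f0 = Qpow t d v \<alpha> S0" using F(2) by blast
    have "phi N v \<alpha> S0 (\<Sum>f\<in>F. fscale (c f) f) = (\<Sum>f\<in>F. c f * phi N v \<alpha> S0 f)"
      by (rule phi_lin[OF F(1)])
    moreover have "phi N v \<alpha> S0 (\<Sum>f\<in>F. fscale (c f) f) = 0"
      unfolding F(3) phi_def by simp
    moreover have "(\<Sum>f\<in>F. c f * phi N v \<alpha> S0 f) = c f0 * phi N v \<alpha> S0 f0 + (\<Sum>f\<in>F - {f0}. c f * phi N v \<alpha> S0 f)"
      by (rule sum.remove[OF F(1) f0(1)])
    moreover have "(\<Sum>f\<in>F - {f0}. c f * phi N v \<alpha> S0 f) = 0"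
    proof (rule sum.neutral, rule ballI)
      fix f assume f: "f \<in> F - {f0}"
      then obtain S where S: "S \<in> Subs" "f = Qpow t d v \<alpha> S" using F(2) by blast
      then have "S \<noteq> S0" using f S0 by auto
      then show "c f * phi N v \<alpha> S0 f = 0" using key[OF S(1) S0(1)] S(2) by simp
    qed
    moreover have "phi N v \<alpha> S0 f0 \<noteq> 0" using key[OF S0(1) S0(1)] S0(2) by simp
    ultimately show False using f0(2) by simp
  qed
  have finM: "finite (Mons t d)" and cM: "card (Mons t d) \<le> N choose t"
    using card_Mons[OF d1, of t] unfolding N_def by auto
  have "card (Qpow t d v \<alpha> ` Subs) = card Subs" by (rule card_image[OF inj])
  also have "card Subs = N choose (d - 1)"
    unfolding Subs using n_subsets[of "{0..<N}" "d - 1"] by simp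
  also have "N choose (d - 1) = N choose t"
    using binomial_symmetric[of t N] d1 unfolding N_def by simp
  finally have cB: "card (Mons t d) \<le> card (Qpow t d v \<alpha> ` Subs)" using cM by simp
  have spanEq: "fs.span (Qpow t d v \<alpha> ` Subs) = Hom t d"
    unfolding Hom_Mons by (rule span_eq_count[OF finM indep hom[unfolded Hom_Mons] cB])
  show ?thesis using inj hom indep spanEq by blast
qed

end
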